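(* Let $1\le k\le r-1$, let $x\in\mathcal{K}_k(c,H)$, and let $q_{k-1}\in\mathbb{R}^n$ satisfy $q_{k-1} /\!/ \hat q_{k-1}$. Then the denominator $\hat g_k^T H\hat g_k\, q_{k-1}^T H q_{k-1}-(\hat g_k^T H q_{k-1})^2$ is nonzero and $$p^N_k(x)=p^N_{k-1}(x)+\beta_k\hat g_k+\gamma_{k-1}q_{k-1},$$ where $$\beta_k=-\frac{\hat g_k^T\hat g_k\; q_{k-1}^THq_{k-1}}{\hat g_k^TH\hat g_k\; q_{k-1}^THq_{k-1}-(\hat g_k^THq_{k-1})^2},\qquad \gamma_{k-1}=\frac{\hat g_k^T\hat g_k\; q_{k-1}^TH\hat g_k}{\hat g_k^TH\hat g_k\; q_{k-1}^THq_{k-1}-(\hat g_k^THq_{k-1})^2}.$$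
   Context: Let $H\in\mathbb{R}^{n\times n}$ be symmetric positive definite, $c\in\mathbb{R}^n$, $f(x)=\tfrac12 x^THx+c^Tx$ and $g(x)=Hx+c$ its gradient. For $k\ge 1$ let $\mathcal{K}_k(c,H)=\mathrm{span}\{c,Hc,\dots,H^{k-1}c\}$, and $\mathcal{K}_0(c,H)=\{0\}$. Assume $c\neq 0$ and let $r\ge1$ be the smallest integer with $\mathcal{K}_r(c,H)=\mathcal{K}_{r+1}(c,H)$. For $k\ge 0$ let $\hat x_k$ be the (unique) minimizer of $f$ over $\mathcal{K}_k(c,H)$, $\hat g_k=g(\hat x_k)$, and $\hat q_k=\hat x_{k+1}-\hat x_k$ (so $\hat x_r=-H^{-1}c$ and $\hat q_k\ne 0$ for $k\le r-1$). For $x\in\mathcal{K}_k(c,H)$, the $(k-1)$-th subspace Newton step is $p^N_{k-1}(x)=\hat x_k-x$; likewise $p^N_k(x)=\hat x_{k+1}-x$. Two vectors are parallel, $p /\!/ p'$, if both are nonzero and $p=tp'$ for some scalar $t\neq 0$. *)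

theory Defs
  imports "HOL-Analysis.Analysis"
begin

definition spd :: "real^'n^'n \<Rightarrow> bool" where
  "spd H \<longleftrightarrow> transpose H = H \<and> (\<forall>x. x \<noteq> 0 \<longrightarrow> x \<bullet> (H *v x) > 0)"

definition quadf :: "real^'n^'n \<Rightarrow> real^'n \<Rightarrow> real^'n \<Rightarrow> real" where
  "quadf H c x = (1/2) * (x \<bullet> (H *v x)) + c \<bullet> x"

definition grad :: "real^'n^'n \<Rightarrow> real^'n \<Rightarrow> real^'n \<Rightarrow> real^'n" where
  "grad H c x = H *v x + c"

definition krylov :: "nat \<Rightarrow> real^'n \<Rightarrow> real^'n^'n \<Rightarrow> (real^'n) set" where
  "krylov k c H = span {((\<lambda>v. H *v v) ^^ i) c | i. i < k}"

definition krylov_r :: "real^'n \<Rightarrow> real^'n^'n \<Rightarrow> nat" where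
  "krylov_r c H = (LEAST r. 1 \<le> r \<and> krylov r c H = krylov (Suc r) c H)"

definition xhat :: "real^'n^'n \<Rightarrow> real^'n \<Rightarrow> nat \<Rightarrow> real^'n" where
  "xhat H c k = (THE x. x \<in> krylov k c H \<and> (\<forall>y \<in> krylov k c H. quadf H c x \<le> quadf H c y))"

definition ghat :: "real^'n^'n \<Rightarrow> real^'n \<Rightarrow> nat \<Rightarrow> real^'n" where
  "ghat H c k = grad H c (xhat H c k)"

definition qhat :: "real^'n^'n \<Rightarrow> real^'n \<Rightarrow> nat \<Rightarrow> real^'n" where
  "qhat H c k = xhat H c (Suc k) - xhat H c k"

definition newton_step :: "real^'n^'n \<Rightarrow> real^'n \<Rightarrow> nat \<Rightarrow> real^'n \<Rightarrow> real^'n" where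
  "newton_step H c k x = xhat H c (Suc k) - x"

definition parallel :: "real^'n \<Rightarrow> real^'n \<Rightarrow> bool" where
  "parallel p p' \<longleftrightarrow> p \<noteq> 0 \<and> p' \<noteq> 0 \<and> (\<exists>t. t \<noteq> 0 \<and> p = t *\<^sub>R p')"

end

theory Submission
  imports Defs
begin


context
  fixes H :: "real^'n^'n" and c :: "real^'n"
  assumes spd: "spd H"
begin

lemma Hsym: "(H *v x) \<bullet> y = x \<bullet> (H *v y)"
proof -
  have "transpose H = H" using spd by (simp add: spd_def)
  then have "x v* H = H *v x" by (metis vector_transpose_matrix)
  then show ?thesis by (metis dot_lmul_matrix)
qed

lemma Hpos: "x \<noteq> 0 \<Longrightarrow> x \<bullet> (H *v x) > 0"
  using spd by (simp add: spd_def)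

lemma Hzero: "x \<bullet> (H *v x) = 0 \<Longrightarrow> x = 0"
  using Hpos by fastforce

lemma Hnonneg: "x \<bullet> (H *v x) \<ge> 0"
  using Hpos[of x] by (cases "x = 0") auto

lemma Hlin: "linear (\<lambda>v. H *v v)"
  by (rule matrix_vector_mul_linear)

lemma Hcont: "continuous_on S (\<lambda>x. x \<bullet> (H *v x))"
proof -
  have "bounded_linear (\<lambda>v. H *v v)" using Hlin linear_conv_bounded_linear by blast
  then have "continuous_on S (\<lambda>v. H *v v)" by (simp add: linear_continuous_on)
  then show ?thesis by (auto intro!: continuous_intros)
qed

lemma coercive: "\<exists>m>0. \<forall>x. m * (norm x)^2 \<le> x \<bullet> (H *v x)"
proof -
  have "compact (sphere (0::real^'n) 1)" by simp
  moreover have "sphere (0::real^'n) 1 \<noteq> {}" by simp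
  ultimately obtain u where u: "u \<in> sphere 0 1" and umin: "\<forall>y\<in>sphere 0 1. u \<bullet> (H *v u) \<le> y \<bullet> (H *v y)"
    using continuous_attains_inf[OF _ _ Hcont] by blast
  have "u \<noteq> 0" using u by auto
  then have mpos: "u \<bullet> (H *v u) > 0" by (rule Hpos)
  have "u \<bullet> (H *v u) * (norm x)^2 \<le> x \<bullet> (H *v x)" for x
  proof (cases "x = 0")
    case True then show ?thesis by simp
  next
    case False
    let ?y = "(1 / norm x) *\<^sub>R x"
    have "?y \<in> sphere 0 1" using False by simp
    then have "u \<bullet> (H *v u) \<le> ?y \<bullet> (H *v ?y)" using umin by blast
    also have "?y \<bullet> (H *v ?y) = (x \<bullet> (H *v x)) / (norm x)^2"
      by (simp add: matrix_vector_mult_scaleR inner_scaleR_left inner_scaleR_right power2_eq_square)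
    finally show ?thesis using False by (simp add: pos_le_divide_eq)
  qed
  then show ?thesis using mpos by blast
qed

lemma quad_expand:
  "quadf H c (z + y) = quadf H c z + grad H c z \<bullet> y + (1/2) * (y \<bullet> (H *v y))"
proof -
  have "z \<bullet> (H *v y) = y \<bullet> (H *v z)" using Hsym[of y z] by (simp add: inner_commute)
  then show ?thesis
    unfolding quadf_def grad_def
    by (simp add: matrix_vector_right_distrib inner_add_left inner_add_right inner_commute algebra_simps)
qed

lemma min_exists:
  assumes V: "subspace V"
  shows "\<exists>z\<in>V. \<forall>y\<in>V. quadf H c z \<le> quadf H c y"
proof -
  obtain m where m: "m > 0" "\<And>x. m * (norm x)^2 \<le> x \<bullet> (H *v x)" using coercive by blast
  define R where "R = 2 * norm c / m"
  let ?S = "V \<inter> cball 0 R"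
  have "compact ?S"
    using closed_subspace[OF V] by (simp add: compact_Int_closed closed_Int_compact)
  moreover have "0 \<in> ?S" using V m by (auto simp: subspace_0 R_def)
  moreover have "continuous_on ?S (quadf H c)"
  proof -
    have "quadf H c = (\<lambda>x. (1/2) * (x \<bullet> (H *v x)) + c \<bullet> x)" by (rule ext) (simp add: quadf_def)
    then show ?thesis using Hcont by (auto intro!: continuous_intros)
  qed
  ultimately obtain z where z: "z \<in> ?S" "\<forall>y\<in>?S. quadf H c z \<le> quadf H c y"
    using continuous_attains_inf by blast
  have "quadf H c z \<le> quadf H c y" if "y \<in> V" for y
  proof (cases "y \<in> cball 0 R")
    case True then show ?thesis using z that by blast
  next
    case False
    then have ny: "norm y > R" by (simp add: dist_norm)
    have "quadf H c z \<le> quadf H c 0" using z \<open>0 \<in> ?S\<close> by blast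
    also have "quadf H c 0 = 0" by (simp add: quadf_def)
    also have "0 < quadf H c y"
    proof -
      have "c \<bullet> y \<ge> - (norm c * norm y)" using Cauchy_Schwarz_ineq2[of c y] by simp
      moreover have "(1/2) * (y \<bullet> (H *v y)) \<ge> (1/2) * (m * (norm y)^2)" using m(2)[of y] by simp
      moreover have "m * norm y > 2 * norm c"
        using ny m(1) by (simp add: R_def pos_divide_less_eq mult.commute)
      moreover have "norm y > 0" using ny R_def m(1) by (smt (verit) divide_nonneg_pos norm_ge_zero)
      moreover have "norm y * (2 * norm c) < norm y * (m * norm y)"
        using calculation(3,4) by (rule mult_strict_left_mono)
      moreover have "norm y * (2 * norm c) = 2 * (norm c * norm y)" by simp
      moreover have "norm y * (m * norm y) = m * (norm y)^2" by (simp add: power2_eq_square)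
      ultimately have "0 < (1/2) * (y \<bullet> (H *v y)) + c \<bullet> y"
        by linarith
      then show ?thesis by (simp add: quadf_def)
    qed
    finally show ?thesis by simp
  qed
  then show ?thesis using z by blast
qed

lemma min_orth:
  assumes V: "subspace V" and z: "z \<in> V" and zmin: "\<forall>y\<in>V. quadf H c z \<le> quadf H c y"
    and y: "y \<in> V"
  shows "grad H c z \<bullet> y = 0"
proof (rule ccontr)
  assume ne: "grad H c z \<bullet> y \<noteq> 0"
  then have "y \<noteq> 0" by auto
  then have a: "y \<bullet> (H *v y) > 0" by (rule Hpos)
  define b where "b = grad H c z \<bullet> y"
  define t where "t = - b / (y \<bullet> (H *v y))"
  have "z + t *\<^sub>R y \<in> V" using V z y by (simp add: subspace_add subspace_scale)
  then have "quadf H c z \<le> quadf H c (z + t *\<^sub>R y)" using zmin by blast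
  also have "\<dots> = quadf H c z + t * b + (1/2) * (t * t * (y \<bullet> (H *v y)))"
    by (simp add: quad_expand b_def matrix_vector_mult_scaleR inner_scaleR_left inner_scaleR_right)
  finally have 1: "0 \<le> t * b + (1/2) * (t * t * (y \<bullet> (H *v y)))" by simp
  have "t * b + (1/2) * (t * t * (y \<bullet> (H *v y))) = - (b*b) / (2 * (y \<bullet> (H *v y)))"
    using a by (simp add: t_def field_simps)
  with 1 have "0 \<le> - (b*b) / (2 * (y \<bullet> (H *v y)))" by simp
  moreover have "b * b > 0" using ne b_def not_real_square_gt_zero by blast
  then have "(b*b) / (2 * (y \<bullet> (H *v y))) > 0" using a by (simp add: divide_pos_pos)
  ultimately show False by linarith
qed

lemma xhat_char:
  assumes z: "z \<in> krylov j c H" and orth: "\<forall>y\<in>krylov j c H. grad H c z \<bullet> y = 0"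
  shows "xhat H c j = z"
proof -
  let ?V = "krylov j c H"
  have V: "subspace ?V" by (simp add: krylov_def subspace_span)
  have le: "quadf H c z \<le> quadf H c y" and eq: "quadf H c y = quadf H c z \<Longrightarrow> y = z"
    if "y \<in> ?V" for y
  proof -
    have d: "y - z \<in> ?V" using V that z by (simp add: subspace_diff)
    have "quadf H c y = quadf H c z + (1/2) * ((y - z) \<bullet> (H *v (y - z)))"
      using quad_expand[of z "y - z"] orth d by simp
    then show "quadf H c z \<le> quadf H c y" using Hnonneg[of "y - z"] by simp
    show "quadf H c y = quadf H c z \<Longrightarrow> y = z"
      using \<open>quadf H c y = _\<close> Hzero[of "y - z"] by simp
  qed
  show ?thesis unfolding xhat_def
  proof (rule the_equality)
    show "z \<in> ?V \<and> (\<forall>y\<in>?V. quadf H c z \<le> quadf H c y)" using z le by blast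
    fix w assume w: "w \<in> ?V \<and> (\<forall>y\<in>?V. quadf H c w \<le> quadf H c y)"
    then have "quadf H c w \<le> quadf H c z" using z by blast
    moreover have "quadf H c z \<le> quadf H c w" using le w by blast
    ultimately show "w = z" using eq w by simp
  qed
qed

lemma xhat_props:
  "xhat H c j \<in> krylov j c H \<and> (\<forall>y\<in>krylov j c H. ghat H c j \<bullet> y = 0)"
proof -
  let ?V = "krylov j c H"
  have V: "subspace ?V" by (simp add: krylov_def subspace_span)
  obtain z where z: "z \<in> ?V" "\<forall>y\<in>?V. quadf H c z \<le> quadf H c y" using min_exists[OF V] by blast
  have o: "\<forall>y\<in>?V. grad H c z \<bullet> y = 0" using min_orth[OF V z] by blast
  have "xhat H c j = z" by (rule xhat_char[OF z(1) o])
  then show ?thesis using z o by (simp add: ghat_def)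
qed

end


context
  fixes H :: "real^'n^'n" and c :: "real^'n"
  assumes spd: "spd H"
begin

definition gens :: "nat \<Rightarrow> (real^'n) set" where
  "gens j = {((\<lambda>v. H *v v) ^^ i) c | i. i < j}"

lemma K_def': "krylov j c H = span (gens j)"
  by (simp add: krylov_def gens_def)

lemma K_sub: "subspace (krylov j c H)"
  by (simp add: krylov_def subspace_span)

lemma K_mono: "i \<le> j \<Longrightarrow> krylov i c H \<subseteq> krylov j c H"
  unfolding K_def' gens_def by (rule span_mono) auto

lemma K_Suc_sub: "krylov j c H \<subseteq> krylov (Suc j) c H"
  by (rule K_mono) simp

lemma span_insert_span: "span (insert a (span S)) = span (insert a S)"
  by (simp add: span_insert span_span)

lemma K_Suc: "krylov (Suc j) c H = span (insert (((\<lambda>v. H *v v) ^^ j) c) (krylov j c H))"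
proof -
  have "gens (Suc j) = insert (((\<lambda>v. H *v v) ^^ j) c) (gens j)"
    unfolding gens_def by (auto simp: less_Suc_eq)
  then show ?thesis by (simp add: K_def' span_insert_span)
qed

lemma c_in: "1 \<le> j \<Longrightarrow> c \<in> krylov j c H"
  unfolding K_def' gens_def
  by (rule span_base) (auto intro!: exI[of _ 0])

lemma K0: "krylov 0 c H = {0}"
  by (simp add: K_def' gens_def)

lemma HK_img: "(\<lambda>v. H *v v) ` krylov j c H = span ((\<lambda>v. H *v v) ` gens j)"
  by (simp add: K_def' linear_span_image[OF Hlin[OF spd]])

lemma H_K: "x \<in> krylov j c H \<Longrightarrow> H *v x \<in> krylov (Suc j) c H"
proof -
  assume x: "x \<in> krylov j c H"
  have "(\<lambda>v. H *v v) ` gens j \<subseteq> gens (Suc j)"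
  proof
    fix y assume "y \<in> (\<lambda>v. H *v v) ` gens j"
    then obtain i where "i < j" "y = H *v (((\<lambda>v. H *v v) ^^ i) c)" unfolding gens_def by auto
    then have "y = ((\<lambda>v. H *v v) ^^ Suc i) c" "Suc i < Suc j" by auto
    then show "y \<in> gens (Suc j)" unfolding gens_def by blast
  qed
  then have "span ((\<lambda>v. H *v v) ` gens j) \<subseteq> span (gens (Suc j))"
    by (rule span_mono)
  then have "(\<lambda>v. H *v v) ` krylov j c H \<subseteq> krylov (Suc j) c H"
    using HK_img K_def'[of "Suc j"] by simp
  then show ?thesis using x by blast
qed

lemma exchange:
  assumes v: "v \<in> krylov (Suc j) c H" and nv: "v \<notin> krylov j c H"
  shows "krylov (Suc j) c H = span (insert v (krylov j c H))"
proof
  let ?a = "((\<lambda>v. H *v v) ^^ j) c"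
  show "span (insert v (krylov j c H)) \<subseteq> krylov (Suc j) c H"
    using v K_Suc_sub K_sub by (intro span_minimal) auto
  have "v \<in> span (insert ?a (krylov j c H))" using v K_Suc by simp
  moreover have "v \<notin> span (krylov j c H)" using nv by (simp add: K_def' real_vector.span_span)
  ultimately have "?a \<in> span (insert v (krylov j c H))" by (rule in_span_insert)
  moreover have "krylov j c H \<subseteq> span (insert v (krylov j c H))" by (meson span_superset subset_insertI subset_trans)
  ultimately have "insert ?a (krylov j c H) \<subseteq> span (insert v (krylov j c H))" by blast
  then show "krylov (Suc j) c H \<subseteq> span (insert v (krylov j c H))"
    unfolding K_Suc by (intro span_minimal) auto
qed

lemma xhat0: "xhat H c 0 = 0"
  using xhat_props[OF spd, of c 0] K0 by simp

lemma Hinj: "inj_on (\<lambda>v. H *v v) A"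
proof (rule inj_onI)
  fix x y assume "H *v x = H *v y"
  then have "H *v (x - y) = 0" by (simp add: matrix_vector_mult_diff_distrib)
  then have "(x - y) \<bullet> (H *v (x - y)) = 0" by simp
  then show "x = y" by (metis Hzero[OF spd] eq_iff_diff_eq_0)
qed

lemma ghat_nz:
  assumes c: "c \<noteq> 0" and j: "j < krylov_r c H"
  shows "ghat H c j \<noteq> 0"
proof (cases "j = 0")
  case True
  then show ?thesis using c by (simp add: ghat_def grad_def xhat0)
next
  case False
  then have j1: "1 \<le> j" by simp
  show ?thesis
  proof
    assume g0: "ghat H c j = 0"
    let ?F = "\<lambda>v. H *v v"
    let ?x = "xhat H c j"
    have xin: "?x \<in> krylov j c H" using xhat_props[OF spd] by blast
    have "c = ?F (- ?x)" using g0 by (simp add: ghat_def grad_def vec.neg eq_neg_iff_add_eq_0 add.commute)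
    moreover have "- ?x \<in> krylov j c H" using xin K_sub by (simp add: subspace_neg)
    ultimately have cF: "c \<in> ?F ` krylov j c H" by blast
    have subF: "subspace (?F ` krylov j c H)" by (rule linear_subspace_image[OF Hlin[OF spd] K_sub])
    have "gens (Suc j) \<subseteq> ?F ` krylov j c H"
    proof
      fix y assume "y \<in> gens (Suc j)"
      then obtain i where i: "i < Suc j" "y = (?F ^^ i) c" unfolding gens_def by auto
      show "y \<in> ?F ` krylov j c H"
      proof (cases i)
        case 0 then show ?thesis using i cF by simp
      next
        case (Suc i')
        then have "(?F ^^ i') c \<in> krylov j c H" using i unfolding K_def' gens_def
          by (intro span_base) auto
        then show ?thesis using i Suc by auto
      qed
    qed
    then have "krylov (Suc j) c H \<subseteq> ?F ` krylov j c H"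
      unfolding K_def'[of "Suc j"] using subF by (rule span_minimal)
    then have "dim (krylov (Suc j) c H) \<le> dim (?F ` krylov j c H)" by (rule dim_subset)
    also have "\<dots> = dim (krylov j c H)" by (rule dim_image_eq[OF Hlin[OF spd] Hinj])
    finally have "krylov j c H = krylov (Suc j) c H"
      using K_sub K_Suc_sub by (intro subspace_dim_equal) auto
    moreover have "\<not> (1 \<le> j \<and> krylov j c H = krylov (Suc j) c H)"
      using j unfolding krylov_r_def by (rule not_less_Least)
    ultimately show False using j1 by simp
  qed
qed

lemma ghat_in: "ghat H c j \<in> krylov (Suc j) c H"
proof -
  have "xhat H c j \<in> krylov j c H" using xhat_props[OF spd] by blast
  then have "H *v xhat H c j \<in> krylov (Suc j) c H" by (rule H_K)
  moreover have "c \<in> krylov (Suc j) c H" by (rule c_in) simp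
  ultimately show ?thesis using K_sub by (simp add: ghat_def grad_def subspace_add)
qed

lemma ghat_orth: "y \<in> krylov j c H \<Longrightarrow> ghat H c j \<bullet> y = 0"
  using xhat_props[OF spd] by blast

lemma K_Suc_g:
  assumes c: "c \<noteq> 0" and j: "j < krylov_r c H"
  shows "krylov (Suc j) c H = span (insert (ghat H c j) (krylov j c H))"
proof (rule exchange[OF ghat_in])
  show "ghat H c j \<notin> krylov j c H"
  proof
    assume "ghat H c j \<in> krylov j c H"
    then have "ghat H c j \<bullet> ghat H c j = 0" by (rule ghat_orth)
    then show False using ghat_nz[OF c j] by simp
  qed
qed

end


lemma main_lemma:
  fixes H :: "real^'n^'n" and c x q :: "real^'n" and k :: nat
  assumes spd: "spd H" and c: "c \<noteq> 0"
    and k1: "1 \<le> k" and kr: "k \<le> krylov_r c H - 1"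
    and par: "parallel q (qhat H c (k - 1))"
  defines "g \<equiv> ghat H c k"
  defines "D \<equiv> (g \<bullet> (H *v g)) * (q \<bullet> (H *v q)) - (g \<bullet> (H *v q))^2"
  defines "\<beta> \<equiv> - ((g \<bullet> g) * (q \<bullet> (H *v q))) / D"
  defines "\<gamma> \<equiv> ((g \<bullet> g) * (q \<bullet> (H *v g))) / D"
  shows "D \<noteq> 0 \<and> newton_step H c k x = newton_step H c (k - 1) x + \<beta> *\<^sub>R g + \<gamma> *\<^sub>R q"
proof -
  let ?K = "\<lambda>j. krylov j c H"
  have klt: "k < krylov_r c H" using k1 kr by linarith
  have klt': "k - 1 < krylov_r c H" using klt by linarith
  have sk: "Suc (k - 1) = k" using k1 by simp
  define g' where "g' = ghat H c (k - 1)"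
  define Q where "Q = qhat H c (k - 1)"
  obtain t where t: "t \<noteq> 0" "q = t *\<^sub>R Q" and qnz: "q \<noteq> 0"
    using par unfolding parallel_def Q_def by blast
  have sym: "\<And>u v. (H *v u) \<bullet> v = u \<bullet> (H *v v)" by (rule Hsym[OF spd])
  have gnz: "g \<noteq> 0" unfolding g_def by (rule ghat_nz[OF spd c klt])
  have gorth: "\<And>z. z \<in> ?K k \<Longrightarrow> g \<bullet> z = 0" unfolding g_def by (rule ghat_orth[OF spd])
  have g'orth: "\<And>z. z \<in> ?K (k - 1) \<Longrightarrow> g' \<bullet> z = 0" unfolding g'_def by (rule ghat_orth[OF spd])
  have xk: "xhat H c k \<in> ?K k" using xhat_props[OF spd] by blast
  have xk1: "xhat H c (k - 1) \<in> ?K k"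
    using xhat_props[OF spd, of c "k - 1"] K_mono[OF spd, of "k - 1" k] by auto
  have Qin: "Q \<in> ?K k" unfolding Q_def qhat_def sk using xk xk1 K_sub[OF spd] by (simp add: subspace_diff)
  have qin: "q \<in> ?K k" using t Qin K_sub[OF spd] by (simp add: subspace_scale)
  have HQ: "H *v Q = g - g'" unfolding Q_def qhat_def sk g_def g'_def ghat_def grad_def
    by (simp add: matrix_vector_mult_diff_distrib)
  have Hq: "H *v q = t *\<^sub>R (g - g')" using t HQ by (simp add: matrix_vector_mult_scaleR)
  have Kk1: "\<And>z. z \<in> ?K (k - 1) \<Longrightarrow> z \<in> ?K k" using K_mono[OF spd, of "k - 1" k] by auto
  have F5: "\<And>z. z \<in> ?K (k - 1) \<Longrightarrow> (H *v q) \<bullet> z = 0"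
    using Hq gorth g'orth Kk1 by (simp add: inner_diff_left)
  have F6: "\<And>z. z \<in> ?K (k - 1) \<Longrightarrow> (H *v g) \<bullet> z = 0"
  proof -
    fix z assume "z \<in> ?K (k - 1)"
    then have "H *v z \<in> ?K k" using H_K[OF spd] sk by metis
    then show "(H *v g) \<bullet> z = 0" using sym gorth by simp
  qed
  have qnot: "q \<notin> ?K (k - 1)"
  proof
    assume "q \<in> ?K (k - 1)"
    then have "(H *v q) \<bullet> q = 0" by (rule F5)
    then have "q \<bullet> (H *v q) = 0" by (simp add: inner_commute)
    then show False using Hzero[OF spd] qnz by blast
  qed
  have F7: "?K k = span (insert q (?K (k - 1)))"
    using exchange[OF spd, of q "k - 1"] qin qnot sk by simp
  have F8: "?K (Suc k) = span (insert g (?K k))"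
    unfolding g_def by (rule K_Suc_g[OF spd c klt])
  define a where "a = g \<bullet> (H *v g)"
  define b where "b = g \<bullet> (H *v q)"
  define d where "d = q \<bullet> (H *v q)"
  define gg where "gg = g \<bullet> g"
  have qHg: "q \<bullet> (H *v g) = b" unfolding b_def using sym[of q g] by (simp add: inner_commute)
  have Hgq: "(H *v g) \<bullet> q = b" unfolding b_def using sym[of g q] by simp
  have Hqg: "(H *v q) \<bullet> g = b" unfolding b_def by (simp add: inner_commute)
  have Hgg: "(H *v g) \<bullet> g = a" unfolding a_def by (simp add: inner_commute)
  have Hqq: "(H *v q) \<bullet> q = d" unfolding d_def by (simp add: inner_commute)
  have apos: "a > 0" unfolding a_def using Hpos[OF spd gnz] .
  have ggpos: "gg > 0" unfolding gg_def using gnz by simp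
  have gq: "g \<bullet> q = 0" using gorth qin by simp
  have Dd: "D = a * d - b^2" unfolding D_def a_def b_def d_def ..
  have Dnz: "D \<noteq> 0"
  proof
    assume D0: "D = 0"
    define w where "w = b *\<^sub>R g - a *\<^sub>R q"
    have "w \<bullet> (H *v w) = b*b*a - a*b*b - a*b*b + a*a*d"
      unfolding w_def
      by (simp add: matrix_vector_mult_diff_distrib matrix_vector_mult_scaleR inner_diff_left
          inner_diff_right a_def[symmetric] b_def[symmetric] d_def[symmetric] qHg; algebra)
    also have "\<dots> = a * D" unfolding Dd by (simp add: power2_eq_square right_diff_distrib)
    finally have "w \<bullet> (H *v w) = 0" using D0 by simp
    then have w0: "w = 0" by (rule Hzero[OF spd])
    then have "w \<bullet> g = 0" by simp
    moreover have "w \<bullet> g = b * gg - a * (q \<bullet> g)" unfolding w_def gg_def by (simp add: inner_diff_left)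
    moreover have "q \<bullet> g = 0" using gq by (simp add: inner_commute)
    ultimately have "b * gg = 0" by simp
    then have b0: "b = 0" using ggpos by simp
    then have "a *\<^sub>R q = 0" using w0 unfolding w_def by simp
    then show False using apos qnz by simp
  qed
  define y where "y = xhat H c k + \<beta> *\<^sub>R g + \<gamma> *\<^sub>R q"
  have yin: "y \<in> ?K (Suc k)"
  proof -
    have "xhat H c k \<in> ?K (Suc k)" using xk K_Suc_sub[OF spd] by blast
    moreover have "g \<in> ?K (Suc k)" unfolding g_def by (rule ghat_in[OF spd])
    moreover have "q \<in> ?K (Suc k)" using qin K_Suc_sub[OF spd] by blast
    ultimately show ?thesis unfolding y_def using K_sub[OF spd, of "Suc k"]
      by (simp add: subspace_add subspace_scale)
  qed
  define G where "G = grad H c y"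
  have G: "G = g + \<beta> *\<^sub>R (H *v g) + \<gamma> *\<^sub>R (H *v q)"
    unfolding G_def y_def g_def ghat_def grad_def
    by (simp add: matrix_vector_right_distrib matrix_vector_mult_scaleR algebra_simps)
  have Gz: "G \<bullet> z = 0" if "z \<in> ?K (k - 1)" for z
    using that G gorth Kk1 F5 F6 by (simp add: inner_add_left)
  have Gg: "G \<bullet> g = 0"
  proof -
    have "G \<bullet> g = gg + \<beta> * a + \<gamma> * b"
      using G Hgg Hqg by (simp add: inner_add_left gg_def)
    also have "\<dots> = 0" using Dnz unfolding \<beta>_def \<gamma>_def qHg gg_def[symmetric] d_def[symmetric] Dd
      by (simp add: field_simps power2_eq_square)
    finally show ?thesis .
  qed
  have Gq: "G \<bullet> q = 0"
  proof -
    have "G \<bullet> q = \<beta> * b + \<gamma> * d"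
      using G Hgq Hqq gq by (simp add: inner_add_left)
    also have "\<dots> = 0" using Dnz unfolding \<beta>_def \<gamma>_def qHg gg_def[symmetric] d_def[symmetric] Dd
      by (simp add: field_simps power2_eq_square)
    finally show ?thesis .
  qed
  have sub0: "subspace {z. G \<bullet> z = 0}"
    using subspace_orthogonal_to_vector[of G] by (simp add: orthogonal_def)
  have "?K k \<subseteq> {z. G \<bullet> z = 0}"
    unfolding F7 using Gz Gq by (intro span_minimal[OF _ sub0]) auto
  then have "?K (Suc k) \<subseteq> {z. G \<bullet> z = 0}"
    unfolding F8 using Gg by (intro span_minimal[OF _ sub0]) auto
  then have "\<forall>z\<in>?K (Suc k). grad H c y \<bullet> z = 0" unfolding G_def by blast
  then have "xhat H c (Suc k) = y" by (rule xhat_char[OF spd yin])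
  then show ?thesis using Dnz unfolding newton_step_def sk y_def by (simp add: algebra_simps)
qed


theorem mainTheorem1:
  fixes H :: "real^'n^'n" and c x q :: "real^'n" and k :: nat
  assumes "spd H" and "c \<noteq> 0"
    and "1 \<le> k" and "k \<le> krylov_r c H - 1"
    and "x \<in> krylov k c H"
    and "parallel q (qhat H c (k - 1))"
  shows "let g = ghat H c k;
             D = (g \<bullet> (H *v g)) * (q \<bullet> (H *v q)) - (g \<bullet> (H *v q))^2;
             \<beta> = - ((g \<bullet> g) * (q \<bullet> (H *v q))) / D;
             \<gamma> = ((g \<bullet> g) * (q \<bullet> (H *v g))) / D
         in D \<noteq> 0 \<and>
            newton_step H c k x = newton_step H c (k - 1) x + \<beta> *\<^sub>R g + \<gamma> *\<^sub>R q"
  unfolding Let_def using main_lemma[OF assms(1,2,3,4,6), of x] by blast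

end
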